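(* Let $\mathscr{C}=\left\{\sum_{i=1}^{\infty} t_i 3^{-i} : t_i\in\{0,2\}\right\}$ be the middle-third Cantor set, and for an integer $m\geq 1$ let $\mathscr{C}^{(m)}=\{x^m : x\in\mathscr{C}\}$. Let $t_m=2\cdot\left\lceil \left(\tfrac{3}{2}\right)^{m-1}\right\rceil$. Then the $t_m$-fold sumset \[\underbrace{\mathscr{C}^{(m)}+\mathscr{C}^{(m)}+\cdots+\mathscr{C}^{(m)}}_{t_m\text{ times}}=\{y_1+\cdots+y_{t_m} : y_j\in\mathscr{C}^{(m)}\}\] contains the interval \[I=\left[(m+1)\left(\tfrac{2}{3}\right)^{m}+(m-1),\ (m-1)\left(\tfrac{2}{3}\right)^{m}+(m+1)\right],\] which has Lebesgue measure $2\left(1-\left(\tfrac{2}{3}\right)^{m}\right)$. *)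

theory Defs
  imports "HOL-Analysis.Analysis"
begin

text \<open>Middle-third Cantor set: all sums  sum_{i>=1} t_i 3^{-i}  with digits t_i in {0,2}.
  Here the digit sequence is indexed from 0, so digit d i has weight 3^{-(i+1)}.\<close>
definition cantor_set :: "real set" where
  "cantor_set = {x. \<exists>d::nat \<Rightarrow> real. (\<forall>i. d i \<in> {0, 2}) \<and> x = (\<Sum>i. d i / 3 ^ Suc i)}"

definition cantor_pow :: "nat \<Rightarrow> real set" where
  "cantor_pow m = {x ^ m | x. x \<in> cantor_set}"

definition sumset_iter :: "nat \<Rightarrow> real set \<Rightarrow> real set" where
  "sumset_iter k A = {\<Sum>j<k. y j | y. \<forall>j<k. y j \<in> A}"

end

theory Submission
  imports Defs
begin


context
  fixes f :: "real \<Rightarrow> real" and D0 D1 :: real and t :: nat and y :: real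
  assumes slope: "\<And>v w. 2/3 \<le> v \<Longrightarrow> v \<le> w \<Longrightarrow> w \<le> 1 \<Longrightarrow> D0*(w-v) \<le> f w - f v \<and> f w - f v \<le> D1*(w-v)"
  and D0: "0 \<le> D0" and tD: "D1 \<le> (real t - 1) * D0" and t1: "1 \<le> t"
  and cont: "\<And>x. isCont f x"
begin

lemma step_inv:
  assumes U: "\<forall>j<t. 2/3 \<le> U j \<and> U j + 3*g \<le> 1" and lo: "(\<Sum>j<t. f (U j)) \<le> y"
    and up: "y \<le> (\<Sum>j<t. f (U j + 3*g))" and g: "0 < g"
  shows "i \<le> t \<Longrightarrow> \<exists>V. (\<forall>j. V j = U j \<or> (j < i \<and> V j = U j + 2*g)) \<and> (\<Sum>j<t. f (V j)) \<le> y
          \<and> y \<le> (\<Sum>j<t. f (V j + (if j < i then g else 3*g)))"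
proof (induction i)
  case 0
  then show ?case using lo up by (intro exI[of _ U]) auto
next
  case (Suc i)
  then obtain V where V1: "\<forall>j. V j = U j \<or> (j < i \<and> V j = U j + 2*g)" and V2: "(\<Sum>j<t. f (V j)) \<le> y"
    and V3: "y \<le> (\<Sum>j<t. f (V j + (if j < i then g else 3*g)))" by auto
  define w where "w j = (if j < i then g else 3*g)" for j
  define w' where "w' j = (if j < Suc i then g else 3*g)" for j
  have it: "i < t" "i \<in> {..<t}" using Suc by auto
  have Vi: "V i = U i" using V1 by auto
  let ?R = "{..<t} - {i}"
  have cardR: "card ?R = t - 1" using it by simp
  have each: "D0 * g \<le> f (V j + w j) - f (V j)" if "j \<in> ?R" for j
  proof -
    have jt: "j < t" using that by auto
    have a: "2/3 \<le> V j" "V j + w j \<le> 1" "g \<le> w j"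
      using V1[rule_format, of j] U[rule_format, OF jt] g by (auto simp: w_def)
    have "D0 * w j \<le> f (V j + w j) - f (V j)" using slope[of "V j" "V j + w j"] a g by (auto simp: w_def)
    moreover have "D0 * g \<le> D0 * w j" using D0 a by (simp add: mult_left_mono)
    ultimately show ?thesis by linarith
  qed
  have k1: "(\<Sum>j\<in>?R. D0 * g) \<le> (\<Sum>j\<in>?R. f (V j + w j) - f (V j))"
    by (rule sum_mono) (rule each)
  have k2: "(\<Sum>j\<in>?R. D0 * g) = (real t - 1) * D0 * g" using cardR t1 by (simp add: of_nat_diff)
  have k3: "f (U i + 2*g) - f (U i + g) \<le> D1 * g"
    using slope[of "U i + g" "U i + 2*g"] U[rule_format, OF it(1)] g by auto
  have k4: "D1 * g \<le> (real t - 1) * D0 * g" using tD g by simp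
  have k5: "(\<Sum>j\<in>?R. f (V j + w j) - f (V j)) = (\<Sum>j\<in>?R. f (V j + w j)) - (\<Sum>j\<in>?R. f (V j))"
    by (rule sum_subtractf)
  have key: "f (U i + 2*g) - f (U i + g) \<le> (\<Sum>j\<in>?R. f (V j + w j)) - (\<Sum>j\<in>?R. f (V j))"
    using k1 k2 k3 k4 k5 by linarith
  have sV: "(\<Sum>j<t. F j) = F i + (\<Sum>j\<in>?R. F j)" for F :: "nat \<Rightarrow> real"
    using sum.remove[of "{..<t}" i F] it by simp
  have ww: "j \<in> ?R \<Longrightarrow> j < Suc i \<longleftrightarrow> j < i" for j by auto
  have RR: "(\<Sum>j\<in>?R. f (V j + w' j)) = (\<Sum>j\<in>?R. f (V j + w j))"
    by (rule sum.cong) (auto simp: w_def w'_def)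
  show ?case
  proof (cases "y \<le> (\<Sum>j<t. f (V j + w' j))")
    case True
    then show ?thesis using V1 V2 by (intro exI[of _ V]) (auto simp: w'_def)
  next
    case False
    define W where "W = V(i := U i + 2*g)"
    have RW: "(\<Sum>j\<in>?R. F (W j) j) = (\<Sum>j\<in>?R. F (V j) j)" for F :: "real \<Rightarrow> nat \<Rightarrow> real"
      by (rule sum.cong) (auto simp: W_def)
    have "(\<Sum>j<t. f (W j)) \<le> y"
    proof -
      have "(\<Sum>j<t. f (W j)) = f (U i + 2*g) + (\<Sum>j\<in>?R. f (V j))"
        using sV[of "\<lambda>j. f (W j)"] RW[of "\<lambda>x j. f x"] by (simp add: W_def)
      moreover have "(\<Sum>j<t. f (V j + w' j)) = f (U i + g) + (\<Sum>j\<in>?R. f (V j + w j))"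
        using sV[of "\<lambda>j. f (V j + w' j)"] RR Vi by (simp add: w'_def)
      ultimately show ?thesis using False key by linarith
    qed
    moreover have "y \<le> (\<Sum>j<t. f (W j + w' j))"
    proof -
      have e3: "f (U i + 2*g + g) = f (U i + 3*g)" by (simp add: algebra_simps)
      have "(\<Sum>j<t. f (W j + w' j)) = f (U i + 3*g) + (\<Sum>j\<in>?R. f (V j + w j))"
        using sV[of "\<lambda>j. f (W j + w' j)"] RW[of "\<lambda>x j. f (x + w' j)"] RR e3 by (simp add: W_def w'_def)
      moreover have "(\<Sum>j<t. f (V j + w j)) = f (U i + 3*g) + (\<Sum>j\<in>?R. f (V j + w j))"
        using sV[of "\<lambda>j. f (V j + w j)"] Vi by (simp add: w_def)
      ultimately show ?thesis using V3 by (simp add: w_def)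
    qed
    moreover have "\<forall>j. W j = U j \<or> (j < Suc i \<and> W j = U j + 2*g)" using V1 by (auto simp: W_def)
    ultimately show ?thesis by (intro exI[of _ W]) (auto simp: w'_def)
  qed
qed

lemma step:
  assumes U: "\<forall>j<t. 2/3 \<le> U j \<and> U j + 3*g \<le> 1" and lo: "(\<Sum>j<t. f (U j)) \<le> y"
    and up: "y \<le> (\<Sum>j<t. f (U j + 3*g))" and g: "0 < g"
  shows "\<exists>V. (\<forall>j. V j = U j \<or> V j = U j + 2*g) \<and> (\<forall>j<t. 2/3 \<le> V j \<and> V j + g \<le> 1)
     \<and> (\<Sum>j<t. f (V j)) \<le> y \<and> y \<le> (\<Sum>j<t. f (V j + g))"
proof -
  obtain V where V1: "\<forall>j. V j = U j \<or> (j < t \<and> V j = U j + 2*g)" and V2: "(\<Sum>j<t. f (V j)) \<le> y"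
          and V3: "y \<le> (\<Sum>j<t. f (V j + (if j < t then g else 3*g)))"
    using step_inv[OF assms, of t] by auto
  have "(\<Sum>j<t. f (V j + (if j < t then g else 3*g))) = (\<Sum>j<t. f (V j + g))" by simp
  moreover have "\<forall>j<t. 2/3 \<le> V j \<and> V j + g \<le> 1"
  proof (intro allI impI)
    fix j assume "j < t" then show "2/3 \<le> V j \<and> V j + g \<le> 1"
      using U[rule_format, of j] V1[rule_format, of j] g by auto
  qed
  ultimately show ?thesis using V1 V2 V3 by (intro exI[of _ V]) auto
qed

lemma digits_summable:
  assumes "\<And>i. d i \<in> {0, 2::real}"
  shows "summable (\<lambda>i. d i / 3 ^ (i + k))"
proof (rule summable_comparison_test)
  show "\<exists>N. \<forall>n\<ge>N. norm (d n / 3 ^ (n + k)) \<le> 2 * (1/3) ^ n"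
  proof (intro exI allI impI)
    fix n :: nat
    have "norm (d n / 3 ^ (n + k)) \<le> 2 / 3 ^ (n + k)" using assms[of n] by auto
    also have "\<dots> \<le> 2 / 3 ^ n" by (rule divide_left_mono) (auto simp: power_increasing)
    also have "\<dots> = 2 * (1/3) ^ n" by (simp add: power_one_over)
    finally show "norm (d n / 3 ^ (n + k)) \<le> 2 * (1/3) ^ n" .
  qed
  show "summable (\<lambda>n. 2 * (1/3::real) ^ n)" by (intro summable_mult summable_geometric) simp
qed

lemma main:
  assumes lo: "real t * f (2/3) \<le> y" and up: "y \<le> real t * f 1"
  shows "\<exists>x. (\<forall>j<t. x j \<in> cantor_set) \<and> y = (\<Sum>j<t. f (x j))"
proof -
  define P where "P n U \<longleftrightarrow> (\<forall>j<t. 2/3 \<le> U j \<and> U j + 1/3^(Suc n) \<le> 1) \<and> (\<Sum>j<t. f (U j)) \<le> y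
      \<and> y \<le> (\<Sum>j<t. f (U j + 1/3^(Suc n)))" for n and U :: "nat \<Rightarrow> real"
  define Q where "Q n U V \<longleftrightarrow> (\<forall>j. V j = U j \<or> V j = U j + 2 * (1/3^(Suc (Suc n))))"
    for n and U V :: "nat \<Rightarrow> real"
  have "\<exists>S. \<forall>n. P n (S n) \<and> Q n (S n) (S (Suc n))"
  proof (rule dependent_nat_choice)
    show "\<exists>U. P 0 U" using lo up by (intro exI[of _ "\<lambda>_. 2/3"]) (auto simp: P_def)
  next
    fix U n assume "P n U"
    then have a: "\<forall>j<t. 2/3 \<le> U j \<and> U j + 3 * (1/3^(Suc (Suc n))) \<le> 1"
      "(\<Sum>j<t. f (U j)) \<le> y" "y \<le> (\<Sum>j<t. f (U j + 3 * (1/3^(Suc (Suc n)))))"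
      by (auto simp: P_def)
    show "\<exists>V. P (Suc n) V \<and> Q n U V"
      using step[OF a] by (auto simp: P_def Q_def)
  qed
  then obtain S where SP: "\<And>n. P n (S n)" and SQ: "\<And>n. Q n (S n) (S (Suc n))" by blast
  define d where "d j i = (S (Suc i) j - S i j) * 3^(i+2)" for j i
  have d02: "d j i \<in> {0, 2}" for j i
    using SQ[of i] unfolding Q_def d_def by (auto simp: field_simps)
  have S0: "S 0 j = 2/3" if "j < t" for j using SP[of 0] that unfolding P_def by force
  have Sn: "S n j = S 0 j + (\<Sum>i<n. d j i / 3^(i+2))" for n j
  proof (induction n)
    case (Suc n)
    have "S (Suc n) j = S n j + d j n / 3^(n+2)" by (simp add: d_def)
    then show ?case using Suc by simp
  qed simp
  define x where "x j = 2/3 + (\<Sum>i. d j i / 3^(i+2))" for j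
  have summ: "summable (\<lambda>i. d j i / 3^(i+2))" for j by (rule digits_summable) (rule d02)
  have c1: "(\<lambda>n. S n j) \<longlonglongrightarrow> x j" if "j < t" for j
  proof -
    have "(\<lambda>n. S n j) = (\<lambda>n. 2/3 + (\<Sum>i<n. d j i / 3^(i+2)))"
      using Sn[of _ j] S0[OF that] by auto
    then show ?thesis unfolding x_def by (simp only:) (intro tendsto_add tendsto_const summable_LIMSEQ summ)
  qed
  have h0: "(\<lambda>n. 1/3^(Suc n) :: real) \<longlonglongrightarrow> 0"
  proof -
    have "(\<lambda>n. (1/3::real)^ Suc n) \<longlonglongrightarrow> 0" by (rule LIMSEQ_Suc[OF LIMSEQ_power_zero]) simp
    then show ?thesis by (simp add: power_one_over)
  qed
  have c2: "(\<lambda>n. S n j + 1/3^(Suc n)) \<longlonglongrightarrow> x j" if "j < t" for j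
    using tendsto_add[OF c1[OF that] h0] by simp
  have l1: "(\<lambda>n. \<Sum>j<t. f (S n j)) \<longlonglongrightarrow> (\<Sum>j<t. f (x j))"
    by (intro tendsto_sum isCont_tendsto_compose[OF cont] c1) simp
  have l2: "(\<lambda>n. \<Sum>j<t. f (S n j + 1/3^(Suc n))) \<longlonglongrightarrow> (\<Sum>j<t. f (x j))"
    by (intro tendsto_sum isCont_tendsto_compose[OF cont] c2) simp
  have "(\<Sum>j<t. f (x j)) \<le> y" by (rule LIMSEQ_le_const2[OF l1]) (use SP in \<open>auto simp: P_def\<close>)
  moreover have "y \<le> (\<Sum>j<t. f (x j))" by (rule LIMSEQ_le_const[OF l2]) (use SP in \<open>auto simp: P_def\<close>)
  moreover have "x j \<in> cantor_set" for j
  proof -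
    define e where "e i = (if i = 0 then 2 else d j (i - 1))" for i
    have e02: "e i \<in> {0, 2}" for i using d02 by (auto simp: e_def)
    have se: "summable (\<lambda>i. e i / 3 ^ (i + 1))" by (rule digits_summable) (rule e02)
    have se': "summable (\<lambda>i. e i / 3 ^ Suc i)" using se by simp
    have "(\<Sum>n. e (Suc n) / 3 ^ Suc (Suc n)) = (\<Sum>i. e i / 3 ^ Suc i) - e 0 / 3 ^ Suc 0"
      by (rule suminf_split_head[OF se'])
    moreover have "(\<lambda>n. e (Suc n) / 3 ^ Suc (Suc n)) = (\<lambda>i. d j i / 3^(i+2))"
      by (auto simp: e_def)
    ultimately have "x j = (\<Sum>i. e i / 3 ^ Suc i)" by (simp add: x_def e_def)
    then show ?thesis unfolding cantor_set_def using e02 by blast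
  qed
  ultimately show ?thesis by (intro exI[of _ x]) auto
qed

end

lemma pow_slope:
  fixes v w :: real
  assumes "1 \<le> m" "2/3 \<le> v" "v \<le> w" "w \<le> 1"
  shows "real m * (2/3)^(m-1) * (w - v) \<le> w^m - v^m \<and> w^m - v^m \<le> real m * (w - v)"
proof -
  obtain n where n: "m = Suc n" using assms(1) by (cases m) auto
  have eq: "w^m - v^m = (w - v) * (\<Sum>p<Suc n. w^p * v^(n-p))"
    unfolding n by (rule diff_power_eq_sum)
  have v0: "0 \<le> v" using assms by simp
  have lb: "(2/3)^n \<le> w^p * v^(n-p)" if "p < Suc n" for p
  proof -
    have "(2/3::real)^n = (2/3)^p * (2/3)^(n-p)" using that by (simp add: power_add[symmetric])
    also have "\<dots> \<le> w^p * v^(n-p)"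
      using assms by (intro mult_mono power_mono) auto
    finally show ?thesis .
  qed
  have ub: "w^p * v^(n-p) \<le> 1" if "p < Suc n" for p
    using assms v0 by (intro mult_le_one power_le_one) auto
  have s1: "real (Suc n) * (2/3)^n \<le> (\<Sum>p<Suc n. w^p * v^(n-p))"
    using sum_mono[of "{..<Suc n}" "\<lambda>_. (2/3::real)^n" "\<lambda>p. w^p * v^(n-p)"] lb by simp
  have s2: "(\<Sum>p<Suc n. w^p * v^(n-p)) \<le> real (Suc n)"
    using sum_mono[of "{..<Suc n}" "\<lambda>p. w^p * v^(n-p)" "\<lambda>_. 1::real"] ub by simp
  have wv: "0 \<le> w - v" using assms by simp
  define S where "S = (\<Sum>p<Suc n. w^p * v^(n-p))"
  have A: "(w-v) * (real (Suc n) * (2/3)^n) \<le> (w-v) * S" unfolding S_def by (rule mult_left_mono[OF s1 wv])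
  have B: "(w-v) * S \<le> (w-v) * real (Suc n)" unfolding S_def by (rule mult_left_mono[OF s2 wv])
  have e1: "real m * (2/3)^(m-1) * (w - v) = (w-v) * (real (Suc n) * (2/3)^n)" using n by simp
  have e2: "real m * (w - v) = (w-v) * real (Suc n)" using n by simp
  have e3: "w^m - v^m = (w-v) * S" using eq S_def by simp
  show ?thesis using A B e1 e2 e3 by linarith
qed

lemma three_halves: "real k < (3/2::real)^k"
proof (induction k)
  case (Suc k)
  show ?case
  proof (cases "k \<le> 1")
    case True
    then have "k = 0 \<or> k = 1" by auto
    then show ?thesis by auto
  next
    case False
    then have "real k + 1 \<le> 3/2 * real k" by simp
    also have "\<dots> < 3/2 * (3/2)^k" using Suc by simp
    finally show ?thesis by simp
  qed
qed simp

lemma measure_Icc_leb: "l \<le> u \<Longrightarrow> measure lebesgue {l..u::real} = u - l"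
  by (subst measure_completion) (auto simp: measure_def)

theorem theorem3:
  fixes m :: nat
  assumes "m \<ge> 1"
  shows "{(real m + 1) * (2/3) ^ m + (real m - 1) .. (real m - 1) * (2/3) ^ m + (real m + 1)}
           \<subseteq> sumset_iter (2 * nat \<lceil>(3/2 :: real) ^ (m - 1)\<rceil>) (cantor_pow m)
         \<and> measure lebesgue {(real m + 1) * (2/3) ^ m + (real m - 1) .. (real m - 1) * (2/3) ^ m + (real m + 1)}
           = 2 * (1 - (2/3) ^ m)"
proof -
  define R :: real where "R = (3/2)^(m-1)"
  define t where "t = 2 * nat \<lceil>R\<rceil>"
  define a :: real where "a = (2/3)^m"
  define C :: real where "C = of_int \<lceil>R\<rceil>"
  have R1: "1 \<le> R" unfolding R_def by simp
  have RC: "R \<le> C" "C < R + 1" unfolding C_def by linarith+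
  have tC: "real t = 2 * C" unfolding t_def C_def using R1 by simp
  have Cm: "real m \<le> C"
  proof -
    have "real (m - 1) < R" unfolding R_def by (rule three_halves)
    then have "int m \<le> \<lceil>R\<rceil>" using assms by (simp add: le_ceiling_iff of_nat_diff)
    then show ?thesis unfolding C_def by linarith
  qed
  have Ra: "R * (2/3)^(m-1) = 1" unfolding R_def by (simp add: power_mult_distrib[symmetric])
  have a23: "a = 2/3 * (2/3)^(m-1)" unfolding a_def using assms
    by (metis Suc_diff_1 less_le_trans zero_less_one power_Suc)
  have Ra': "R * a = 2/3" using Ra a23 by (simp add: mult_ac)
  have a0: "0 < a" "a \<le> 1" unfolding a_def by (auto intro: power_le_one)
  have p0: "0 < (2/3::real)^(m-1)" by simp
  have lower: "real t * a \<le> (real m + 1) * a + (real m - 1)"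
  proof (cases "m = 1")
    case True
    then have "R = 1" unfolding R_def by simp
    then have "C = 1" unfolding C_def by simp
    then show ?thesis using True tC by simp
  next
    case False
    then have m2: "m \<ge> 2" using assms by simp
    have "real t * a \<le> 2 * (R + 1) * a" using tC RC a0 by (simp add: mult_right_mono)
    also have "\<dots> = 4/3 + 2 * a" using Ra' by (simp add: algebra_simps)
    also have "\<dots> \<le> (real m + 1) * a + (real m - 1)"
    proof (cases "m = 2")
      case True then show ?thesis by (simp add: a_def power2_eq_square)
    next
      case False
      then have "real m \<ge> 3" using m2 by simp
      moreover have "a * 1 \<le> a * real m" using a0 \<open>real m \<ge> 3\<close> by (intro mult_left_mono) auto
      ultimately show ?thesis by (simp add: algebra_simps)
    qed
    finally show ?thesis .
  qed
  have upper: "(real m - 1) * a + (real m + 1) \<le> real t"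
  proof -
    have "(real m - 1) * a \<le> (real m - 1)" using a0 assms by (simp add: mult_left_le)
    then show ?thesis using tC Cm by linarith
  qed
  have t1: "1 \<le> t" using tC RC R1 by simp
  have tD: "real m \<le> (real t - 1) * (real m * (2/3)^(m-1))"
  proof -
    have "R \<le> real t - 1" using tC RC R1 by linarith
    then have "R * (2/3)^(m-1) \<le> (real t - 1) * (2/3)^(m-1)" using p0 by (intro mult_right_mono) auto
    then have "1 \<le> (real t - 1) * (2/3)^(m-1)" using Ra by linarith
    then have "real m * 1 \<le> real m * ((real t - 1) * (2/3)^(m-1))" by (intro mult_left_mono) auto
    then show ?thesis by (simp add: mult_ac)
  qed
  have sub: "{real t * a .. real t} \<subseteq> sumset_iter t (cantor_pow m)"
  proof
    fix y assume y: "y \<in> {real t * a .. real t}"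
    have "\<exists>x. (\<forall>j<t. x j \<in> cantor_set) \<and> y = (\<Sum>j<t. (x j)^m)"
    proof (rule main[where f="\<lambda>x. x^m" and ?D0.0="real m * (2/3)^(m-1)" and ?D1.0="real m" and t=t and y=y])
      show "\<And>v w. 2/3 \<le> v \<Longrightarrow> v \<le> w \<Longrightarrow> w \<le> 1 \<Longrightarrow>
         real m * (2/3)^(m-1) * (w-v) \<le> w^m - v^m \<and> w^m - v^m \<le> real m * (w-v)"
        using pow_slope assms by blast
    qed (use tD t1 y in \<open>auto simp: a_def\<close>)
    then obtain x where x: "\<forall>j<t. x j \<in> cantor_set" "y = (\<Sum>j<t. (x j)^m)" by blast
    show "y \<in> sumset_iter t (cantor_pow m)"
      unfolding sumset_iter_def cantor_pow_def using x by blast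
  qed
  have "{(real m + 1) * a + (real m - 1) .. (real m - 1) * a + (real m + 1)} \<subseteq> sumset_iter t (cantor_pow m)"
    using sub lower upper by auto
  moreover have "measure lebesgue {(real m + 1) * a + (real m - 1) .. (real m - 1) * a + (real m + 1)}
           = 2 * (1 - a)"
    using a0 by (subst measure_Icc_leb) (auto simp: algebra_simps)
  ultimately show ?thesis unfolding a_def t_def R_def by simp
qed

end
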